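(* Let $A$ be a locale and let $Q$ be an equivariantly supported reflexive based quantal frame with base locale $A$ which has a multiplicative unit. If $Q$ satisfies the inverse law, then it satisfies the unit laws.
   Context: An $A$-$A$-bimodule is a sup-lattice $M$ with actions $a\triangleright m$, $m\triangleleft a$ preserving joins in each variable, with $1_A\triangleright m=m$, $(a\wedge b)\triangleright m=a\triangleright(b\triangleright m)$, $m\triangleleft1_A=m$, $m\triangleleft(a\wedge b)=(m\triangleleft a)\triangleleft b$, $(a\triangleright m)\triangleleft b=a\triangleright(m\triangleleft b)$. An $A$-$A$-quantale is such a $Q$ with associative join-preserving multiplication and $(a\triangleright x)y=a\triangleright(xy)$, $(x\triangleleft a)y=x(a\triangleright y)$, $(xy)\triangleleft a=x(y\triangleleft a)$; involutive if there is a join-preserving $x\mapsto x^*$ with $x^{**}=x$, $(xy)^*=y^*x^*$, $(a\triangleright(x\triangleleft b))^*=b\triangleright(x^*\triangleleft a)$. $1_Q$ is the top. A support is a join-preserving $\varsigma:Q\to A$ with $\varsigma(1_Q)=1_A$, $\varsigma(x)\triangleright y\le xx^*y$, $\varsigma(x)\triangleright x=x$; equivariant if $\varsigma(a\triangleright x)=a\wedge\varsigma(x)$. A based quantal frame is an involutive $A$-$A$-quantale which is a frame with $(a\triangleright x)\wedge y=a\triangleright(x\wedge y)$, $(x\triangleleft a)\wedge y=(x\wedge y)\triangleleft a$; reflexive: a frame homomorphism $\upsilon:Q\to A$ with $\upsilon(a\triangleright1_Q)=a=\upsilon(1_Q\triangleleft a)$. Inverse law: $\upsilon(a)\triangleright1_Q=\bigvee_{xy^*\le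 a}x\wedge y$ for all $a\in Q$. Unit laws: $\bigvee_{xy\le a}\upsilon(x)\triangleright y=a$ for all $a\in Q$. *)

theory Defs
  imports Main
begin

unbundle lattice_syntax

definition is_frame :: "'a::complete_lattice itself \<Rightarrow> bool" where
  "is_frame _ \<longleftrightarrow> (\<forall>(a::'a) S. a \<sqinter> Sup S = Sup ((\<lambda>s. a \<sqinter> s) ` S))"

definition frame_hom :: "('q::complete_lattice \<Rightarrow> 'a::complete_lattice) \<Rightarrow> bool" where
  "frame_hom f \<longleftrightarrow> f top = top \<and> (\<forall>x y. f (x \<sqinter> y) = f x \<sqinter> f y)
      \<and> (\<forall>S. f (Sup S) = Sup (f ` S))"

text \<open>A-A-bimodule structure on the sup-lattice 'q, with A a locale (multiplication = meet,
  unit = top).  lact a m = a \<triangleright> m, ract m a = m \<triangleleft> a.\<close>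
definition AA_bimodule ::
  "('a::complete_lattice \<Rightarrow> 'q::complete_lattice \<Rightarrow> 'q) \<Rightarrow> ('q \<Rightarrow> 'a \<Rightarrow> 'q) \<Rightarrow> bool" where
  "AA_bimodule lact ract \<longleftrightarrow>
     (\<forall>S m. lact (Sup S) m = Sup ((\<lambda>a. lact a m) ` S)) \<and>
     (\<forall>a T. lact a (Sup T) = Sup (lact a ` T)) \<and>
     (\<forall>T a. ract (Sup T) a = Sup ((\<lambda>m. ract m a) ` T)) \<and>
     (\<forall>m S. ract m (Sup S) = Sup (ract m ` S)) \<and>
     (\<forall>m. lact top m = m) \<and>
     (\<forall>a b m. lact (a \<sqinter> b) m = lact a (lact b m)) \<and>
     (\<forall>m. ract m top = m) \<and>
     (\<forall>a b m. ract m (a \<sqinter> b) = ract (ract m a) b) \<and>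
     (\<forall>a b m. ract (lact a m) b = lact a (ract m b))"

definition AA_quantale ::
  "('a::complete_lattice \<Rightarrow> 'q::complete_lattice \<Rightarrow> 'q) \<Rightarrow> ('q \<Rightarrow> 'a \<Rightarrow> 'q)
   \<Rightarrow> ('q \<Rightarrow> 'q \<Rightarrow> 'q) \<Rightarrow> bool" where
  "AA_quantale lact ract mult \<longleftrightarrow>
     AA_bimodule lact ract \<and>
     (\<forall>x y z. mult (mult x y) z = mult x (mult y z)) \<and>
     (\<forall>S y. mult (Sup S) y = Sup ((\<lambda>x. mult x y) ` S)) \<and>
     (\<forall>x S. mult x (Sup S) = Sup (mult x ` S)) \<and>
     (\<forall>a x y. mult (lact a x) y = lact a (mult x y)) \<and>
     (\<forall>a x y. mult (ract x a) y = mult x (lact a y)) \<and>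
     (\<forall>a x y. ract (mult x y) a = mult x (ract y a))"

definition involutive_AA_quantale ::
  "('a::complete_lattice \<Rightarrow> 'q::complete_lattice \<Rightarrow> 'q) \<Rightarrow> ('q \<Rightarrow> 'a \<Rightarrow> 'q)
   \<Rightarrow> ('q \<Rightarrow> 'q \<Rightarrow> 'q) \<Rightarrow> ('q \<Rightarrow> 'q) \<Rightarrow> bool" where
  "involutive_AA_quantale lact ract mult invl \<longleftrightarrow>
     AA_quantale lact ract mult \<and>
     (\<forall>S. invl (Sup S) = Sup (invl ` S)) \<and>
     (\<forall>x. invl (invl x) = x) \<and>
     (\<forall>x y. invl (mult x y) = mult (invl y) (invl x)) \<and>
     (\<forall>a b x. invl (lact a (ract x b)) = lact b (ract (invl x) a))"

text \<open>Support (1_Q is the top of Q).\<close>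
definition is_support ::
  "('a::complete_lattice \<Rightarrow> 'q::complete_lattice \<Rightarrow> 'q) \<Rightarrow> ('q \<Rightarrow> 'q \<Rightarrow> 'q) \<Rightarrow> ('q \<Rightarrow> 'q)
   \<Rightarrow> ('q \<Rightarrow> 'a) \<Rightarrow> bool" where
  "is_support lact mult invl \<sigma> \<longleftrightarrow>
     (\<forall>S. \<sigma> (Sup S) = Sup (\<sigma> ` S)) \<and>
     \<sigma> top = top \<and>
     (\<forall>x y. lact (\<sigma> x) y \<le> mult (mult x (invl x)) y) \<and>
     (\<forall>x. lact (\<sigma> x) x = x)"

definition equivariant_support ::
  "('a::complete_lattice \<Rightarrow> 'q::complete_lattice \<Rightarrow> 'q) \<Rightarrow> ('q \<Rightarrow> 'q \<Rightarrow> 'q) \<Rightarrow> ('q \<Rightarrow> 'q)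
   \<Rightarrow> ('q \<Rightarrow> 'a) \<Rightarrow> bool" where
  "equivariant_support lact mult invl \<sigma> \<longleftrightarrow>
     is_support lact mult invl \<sigma> \<and> (\<forall>a x. \<sigma> (lact a x) = a \<sqinter> \<sigma> x)"

definition based_quantal_frame ::
  "('a::complete_lattice \<Rightarrow> 'q::complete_lattice \<Rightarrow> 'q) \<Rightarrow> ('q \<Rightarrow> 'a \<Rightarrow> 'q)
   \<Rightarrow> ('q \<Rightarrow> 'q \<Rightarrow> 'q) \<Rightarrow> ('q \<Rightarrow> 'q) \<Rightarrow> bool" where
  "based_quantal_frame lact ract mult invl \<longleftrightarrow>
     involutive_AA_quantale lact ract mult invl \<and>
     is_frame TYPE('q) \<and>
     (\<forall>a x y. lact a x \<sqinter> y = lact a (x \<sqinter> y)) \<and>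
     (\<forall>a x y. ract x a \<sqinter> y = ract (x \<sqinter> y) a)"

definition reflexive_bqf ::
  "('a::complete_lattice \<Rightarrow> 'q::complete_lattice \<Rightarrow> 'q) \<Rightarrow> ('q \<Rightarrow> 'a \<Rightarrow> 'q)
   \<Rightarrow> ('q \<Rightarrow> 'q \<Rightarrow> 'q) \<Rightarrow> ('q \<Rightarrow> 'q) \<Rightarrow> ('q \<Rightarrow> 'a) \<Rightarrow> bool" where
  "reflexive_bqf lact ract mult invl \<upsilon> \<longleftrightarrow>
     based_quantal_frame lact ract mult invl \<and>
     frame_hom \<upsilon> \<and>
     (\<forall>a. \<upsilon> (lact a top) = a \<and> \<upsilon> (ract top a) = a)"

definition has_mult_unit :: "('q \<Rightarrow> 'q \<Rightarrow> 'q) \<Rightarrow> bool" where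
  "has_mult_unit mult \<longleftrightarrow> (\<exists>e. \<forall>x. mult e x = x \<and> mult x e = x)"

definition inverse_law ::
  "('a::complete_lattice \<Rightarrow> 'q::complete_lattice \<Rightarrow> 'q) \<Rightarrow> ('q \<Rightarrow> 'q \<Rightarrow> 'q) \<Rightarrow> ('q \<Rightarrow> 'q)
   \<Rightarrow> ('q \<Rightarrow> 'a) \<Rightarrow> bool" where
  "inverse_law lact mult invl \<upsilon> \<longleftrightarrow>
     (\<forall>a. lact (\<upsilon> a) top = Sup {x \<sqinter> y | x y. mult x (invl y) \<le> a})"

definition unit_laws ::
  "('a::complete_lattice \<Rightarrow> 'q::complete_lattice \<Rightarrow> 'q) \<Rightarrow> ('q \<Rightarrow> 'q \<Rightarrow> 'q)
   \<Rightarrow> ('q \<Rightarrow> 'a) \<Rightarrow> bool" where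
  "unit_laws lact mult \<upsilon> \<longleftrightarrow>
     (\<forall>a. Sup {lact (\<upsilon> x) y | x y. mult x y \<le> a} = a)"

end

theory Submission
  imports Defs
begin

lemma sup_pres_mono:
  assumes "\<forall>S. f (Sup S) = Sup (f ` S)" and "(x::'q::complete_lattice) \<le> y"
  shows "(f x :: 'b::complete_lattice) \<le> f y"
proof -
  have "Sup {x, y} = y" using assms(2) by (simp add: sup_absorb2)
  hence "f y = Sup {f x, f y}" using assms(1)[rule_format, of "{x,y}"] by simp
  thus ?thesis by (metis Sup_insert sup.cobounded1 ccpo_Sup_singleton)
qed

theorem corollary5p12:
  fixes lact :: "'a::complete_lattice \<Rightarrow> 'q::complete_lattice \<Rightarrow> 'q"
    and ract :: "'q \<Rightarrow> 'a \<Rightarrow> 'q"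
    and mult :: "'q \<Rightarrow> 'q \<Rightarrow> 'q"
    and invl :: "'q \<Rightarrow> 'q"
    and \<upsilon> :: "'q \<Rightarrow> 'a"
  assumes "is_frame TYPE('a)"
    and "reflexive_bqf lact ract mult invl \<upsilon>"
    and "\<exists>\<sigma>. equivariant_support lact mult invl \<sigma>"
    and "has_mult_unit mult"
    and "inverse_law lact mult invl \<upsilon>"
  shows "unit_laws lact mult \<upsilon>"
proof -
  obtain \<sigma> where sig: "equivariant_support lact mult invl \<sigma>" using assms(3) by blast
  obtain e where e: "\<And>x. mult e x = x" "\<And>x. mult x e = x" using assms(4) unfolding has_mult_unit_def by blast
  have R: "based_quantal_frame lact ract mult invl" "frame_hom \<upsilon>"
    using assms(2) unfolding reflexive_bqf_def by auto
  have I: "involutive_AA_quantale lact ract mult invl" and fr: "is_frame TYPE('q)"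
    and meetl: "\<And>a x y. lact a x \<sqinter> y = lact a (x \<sqinter> y)"
    using R(1) unfolding based_quantal_frame_def by auto
  have Q: "AA_quantale lact ract mult" and invS: "\<forall>S. invl (Sup S) = Sup (invl ` S)"
    and invinv: "\<And>x. invl (invl x) = x" and invm: "\<And>x y. invl (mult x y) = mult (invl y) (invl x)"
    using I unfolding involutive_AA_quantale_def by auto
  have multL: "\<And>y. \<forall>S. mult (Sup S) y = Sup ((\<lambda>x. mult x y) ` S)"
    and multR: "\<And>x. \<forall>S. mult x (Sup S) = Sup (mult x ` S)"
    and multlact: "\<And>a x y. mult (lact a x) y = lact a (mult x y)"
    using Q unfolding AA_quantale_def by auto
  have mono1: "\<And>x x' y. x \<le> x' \<Longrightarrow> mult x y \<le> mult x' y"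
    using sup_pres_mono[OF multL] by blast
  have mono2: "\<And>x y y'. y \<le> y' \<Longrightarrow> mult x y \<le> mult x y'"
    using sup_pres_mono[OF multR] by blast
  have monoi: "\<And>x x'. x \<le> x' \<Longrightarrow> invl x \<le> invl x'"
    using sup_pres_mono[OF invS] by blast
  have supp: "\<And>x. lact (\<sigma> x) x = x" "\<And>x y. lact (\<sigma> x) y \<le> mult (mult x (invl x)) y"
    using sig unfolding equivariant_support_def is_support_def by auto
  have inv: "\<And>a. lact (\<upsilon> a) top = Sup {x \<sqinter> y | x y. mult x (invl y) \<le> a}"
    using assms(5) unfolding inverse_law_def by auto
  have frq: "\<And>(a::'q) S. a \<sqinter> Sup S = Sup ((\<lambda>s. a \<sqinter> s) ` S)"
    using fr unfolding is_frame_def by blast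
  have ee: "invl e = e"
  proof -
    have "invl e = mult (invl e) e" using e(2) by simp
    hence "e = invl (mult (invl e) e)" using invinv by metis
    also have "\<dots> = mult (invl e) (invl (invl e))" using invm by simp
    also have "\<dots> = invl e" using e(2) invinv by simp
    finally show ?thesis by simp
  qed
  have eup: "e \<le> lact (\<upsilon> e) top"
    unfolding inv[of e]
  proof (rule Sup_upper)
    have "mult e (invl e) \<le> e" using e ee by simp
    hence "e \<sqinter> e \<in> {x \<sqinter> y | x y. mult x (invl y) \<le> e}" by blast
    thus "e \<in> {x \<sqinter> y | x y. mult x (invl y) \<le> e}" by simp
  qed
  have ue: "lact (\<upsilon> e) e = e"
    using meetl[of "\<upsilon> e" top e] eup by (simp add: inf_absorb2)
  have ua: "\<And>a. lact (\<upsilon> e) a = a"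
    by (metis e(1) multlact ue)
  show ?thesis unfolding unit_laws_def
  proof
    fix a
    show "Sup {lact (\<upsilon> x) y | x y. mult x y \<le> a} = a"
    proof (rule antisym)
      show "Sup {lact (\<upsilon> x) y | x y. mult x y \<le> a} \<le> a"
      proof (rule Sup_least)
        fix z assume "z \<in> {lact (\<upsilon> x) y | x y. mult x y \<le> a}"
        then obtain x y where z: "z = lact (\<upsilon> x) y" and xy: "mult x y \<le> a" by blast
        have "z = lact (\<upsilon> x) top \<sqinter> y" using z meetl[of "\<upsilon> x" top y] by simp
        also have "\<dots> = y \<sqinter> Sup {u \<sqinter> v | u v. mult u (invl v) \<le> x}" using inv by (simp add: inf_commute)
        also have "\<dots> = Sup ((\<lambda>s. y \<sqinter> s) ` {u \<sqinter> v | u v. mult u (invl v) \<le> x})" by (rule frq)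
        also have "\<dots> \<le> a"
        proof (rule Sup_least)
          fix t assume "t \<in> (\<lambda>s. y \<sqinter> s) ` {u \<sqinter> v | u v. mult u (invl v) \<le> x}"
          then obtain u v where t: "t = y \<sqinter> (u \<sqinter> v)" and uv: "mult u (invl v) \<le> x" by blast
          have "t = lact (\<sigma> t) t" using supp(1) by simp
          also have "\<dots> \<le> mult (mult t (invl t)) t" by (rule supp(2))
          also have "\<dots> \<le> mult (mult u (invl t)) t"
            by (rule mono1, rule mono1) (auto simp add: t intro: le_infI2 le_infI1)
          also have "\<dots> \<le> mult (mult u (invl v)) t"
            by (rule mono1, rule mono2, rule monoi) (auto simp add: t intro: le_infI2 le_infI1)
          also have "\<dots> \<le> mult x t" by (rule mono1[OF uv])
          also have "\<dots> \<le> mult x y" by (rule mono2) (auto simp add: t intro: le_infI2 le_infI1)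
          also have "\<dots> \<le> a" by (rule xy)
          finally show "t \<le> a" .
        qed
        finally show "z \<le> a" .
      qed
      show "a \<le> Sup {lact (\<upsilon> x) y | x y. mult x y \<le> a}"
      proof (rule Sup_upper)
        have "mult e a \<le> a" using e by simp
        hence "lact (\<upsilon> e) a \<in> {lact (\<upsilon> x) y | x y. mult x y \<le> a}" by blast
        thus "a \<in> {lact (\<upsilon> x) y | x y. mult x y \<le> a}" using ua by simp
      qed
    qed
  qed
qed

end
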